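(* Let $K$ be a knot and define $d_{-1}=[F,d_1]$ on $\mathcal{H}(K)$. Then $[E,d_{-1}]=d_1$ and $[F,d_{-1}]=0$, so $d_1,d_{-1}$ span a $2$-dimensional representation of $\mathfrak{sl}(2)$ (under the adjoint action). Furthermore $$d_{-1}^2=d_{-1}d_1+d_1d_{-1}=0.$$ The symmetry of $\mathcal{H}(K)$ exchanges $d_1$ with $d_{-1}$; in particular, $d_{-1}$ is a cancelling differential if $d_1$ is.
   Context: $\mathcal{H}(K)$ is the reduced triply graded (HOMFLY-PT) Khovanov–Rozansky homology of the knot $K$ over $\mathbb{C}$, finite-dimensional and graded by $(q,a,t)$. By Gorsky–Hogancamp–Mellit, $\mathcal{H}(K)$ carries an $\mathfrak{sl}(2)$ action $E,F,H$ with $[E,F]=H$, $[H,E]=2E$, $[H,F]=-2F$, $H=\tfrac12\deg_q$, $E$ raising $q$ by $4$, $F$ lowering it by $4$; it makes $\mathcal{H}(K)$ symmetric under an identification exchanging tridegrees $(q,a,t)$ and $(-q,a,t+2q)$ (the symmetry). $d_1$ is the first differential of Rasmussen's spectral sequence from $\mathcal{H}(K)$ to (one-dimensional) $\mathfrak{sl}(1)$ homology; $d_1^2=0$, $d_1$ changes degrees by $(q,a,t)\mapsto(q+2,a-2,t)$, and $[E,d_1]=0$. *)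

theory Defs
  imports "HOL-Analysis.Analysis"
begin

text \<open>Finite-dimensional complex vector space modelled as complex^'n; linear operators
  as square matrices acting by matrix-vector multiplication.\<close>

definition comm :: "complex^'n^'n \<Rightarrow> complex^'n^'n \<Rightarrow> complex^'n^'n" where
  "comm A B = A ** B - B ** A"

fun mpow :: "complex^'n^'n \<Rightarrow> nat \<Rightarrow> complex^'n^'n" where
  "mpow A 0 = mat 1"
| "mpow A (Suc k) = A ** mpow A k"

text \<open>Exponential of a nilpotent operator (on a space of dimension CARD('n), a nilpotent
  operator satisfies A^CARD('n) = 0, so this truncated series is the exponential).\<close>
definition nil_exp :: "complex^'n^'n \<Rightarrow> complex^'n^'n" where
  "nil_exp A = (\<Sum>k\<le>CARD('n). (1 / fact k) *\<^sub>R mpow A k)"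

text \<open>Weyl element of the sl(2) action: realizes the symmetry of H(K).\<close>
definition weyl :: "complex^'n^'n \<Rightarrow> complex^'n^'n \<Rightarrow> complex^'n^'n" where
  "weyl E F = nil_exp E ** nil_exp (- F) ** nil_exp E"

text \<open>Triple grading: G (q,a,t) is the homogeneous piece of tridegree (q,a,t);
  V is the (internal) direct sum of the pieces, only finitely many of which are nonzero.\<close>
definition trigraded :: "(int \<times> int \<times> int \<Rightarrow> (complex^'n) set) \<Rightarrow> bool" where
  "trigraded G \<longleftrightarrow>
     (\<forall>d. vec.subspace (G d)) \<and> finite {d. G d \<noteq> {0}} \<and>
     (\<forall>x. \<exists>!c. (\<forall>d. c d \<in> G d) \<and> finite {d. c d \<noteq> 0} \<and> x = (\<Sum>d\<in>{d. c d \<noteq> 0}. c d))"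

text \<open>Sum of all pieces of q-degree q.\<close>
definition qpart :: "(int \<times> int \<times> int \<Rightarrow> (complex^'n) set) \<Rightarrow> int \<Rightarrow> (complex^'n) set" where
  "qpart G q = vec.span (\<Union>a t. G (q, a, t))"

text \<open>A cancelling differential: d^2 = 0 and its homology is one-dimensional.\<close>
definition cancelling :: "complex^'n^'n \<Rightarrow> bool" where
  "cancelling d \<longleftrightarrow> d ** d = 0 \<and>
     vec.dim {x. d *v x = 0} = vec.dim (range ((*v) d)) + 1"

end

theory Submission
  imports Defs
begin
lemma mm_add_r: "((A::complex^'n^'n) + B) ** C = A ** C + B ** C"
  by (simp add: matrix_matrix_mult_def vec_eq_iff sum.distrib distrib_right)
lemma mm_diff_r: "((A::complex^'n^'n) - B) ** C = A ** C - B ** C"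
  by (simp add: matrix_matrix_mult_def vec_eq_iff sum_subtractf left_diff_distrib)
lemma mm_diff_l: "(A::complex^'n^'n) ** (B - C) = A ** B - A ** C"
  by (simp add: matrix_matrix_mult_def vec_eq_iff sum_subtractf right_diff_distrib)
lemma mm_neg_l: "(- (A::complex^'n^'n)) ** B = - (A ** B)"
  by (simp add: matrix_matrix_mult_def vec_eq_iff sum_negf)
lemma mm_neg_r: "(A::complex^'n^'n) ** (- B) = - (A ** B)"
  by (simp add: matrix_matrix_mult_def vec_eq_iff sum_negf)
lemma mm_scaleR_l: "(k *\<^sub>R (A::complex^'n^'n)) ** B = k *\<^sub>R (A ** B)"
  by (simp add: scalar_matrix_assoc)
lemma mm_scaleR_r: "(A::complex^'n^'n) ** (k *\<^sub>R B) = k *\<^sub>R (A ** B)"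
  by (simp add: matrix_scalar_ac scalar_matrix_assoc)
lemma mv_scaleR_l: "(k *\<^sub>R (A::complex^'n^'n)) *v x = k *\<^sub>R (A *v x)"
  by (simp add: matrix_vector_mult_def vec_eq_iff scaleR_sum_right)
lemma mv_scaleR_r: "(A::complex^'n^'n) *v (k *\<^sub>R x) = k *\<^sub>R (A *v x)"
  by (simp add: matrix_vector_mult_def vec_eq_iff scaleR_sum_right)
lemma mv_neg_l: "(- (A::complex^'n^'n)) *v x = - (A *v x)"
  by (simp add: matrix_vector_mult_def vec_eq_iff sum_negf)
lemma mv_sum_r: "(A::complex^'n^'n) *v (\<Sum>i\<in>S. f i) = (\<Sum>i\<in>S. A *v f i)"
  by (induct S rule: infinite_finite_induct) (auto simp: matrix_vector_right_distrib)
lemma mv_sum_l: "(\<Sum>i\<in>S. f i :: complex^'n^'n) *v x = (\<Sum>i\<in>S. f i *v x)"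
  by (induct S rule: infinite_finite_induct) (auto simp: matrix_vector_mult_add_rdistrib)
lemma mm_sum_l: "(\<Sum>i\<in>S. f i :: complex^'n^'n) ** B = (\<Sum>i\<in>S. f i ** B)"
  by (induct S rule: infinite_finite_induct) (auto simp: mm_add_r)
lemma mm_sum_r: "B ** (\<Sum>i\<in>S. f i :: complex^'n^'n) = (\<Sum>i\<in>S. B ** f i)"
  by (induct S rule: infinite_finite_induct) (auto simp: matrix_add_ldistrib)
lemma mv_smult_r: "(A::complex^'n^'n) *v (c *s x) = c *s (A *v x)"
  by (simp add: matrix_vector_mult_def vec_eq_iff sum_distrib_left mult_ac)

lemmas mm_simps = matrix_add_ldistrib mm_add_r mm_diff_r mm_diff_l mm_neg_l mm_neg_r
  mm_scaleR_l mm_scaleR_r matrix_mul_assoc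

lemma jacobi: "comm (E::complex^'n^'n) (comm F Z) = comm (comm E F) Z + comm F (comm E Z)"
  by (simp add: comm_def mm_simps algebra_simps)

definition shifts :: "(int \<times> int \<times> int \<Rightarrow> (complex^'n) set) \<Rightarrow> int \<Rightarrow> complex^'n^'n \<Rightarrow> bool" where
  "shifts G s Y \<longleftrightarrow> (\<forall>q x. x \<in> qpart G q \<longrightarrow> Y *v x \<in> qpart G (q + s))"

lemma qpart_subspace: "vec.subspace (qpart G q)"
  unfolding qpart_def by simp

lemma G_in_qpart: "x \<in> G (q, a, t) \<Longrightarrow> x \<in> qpart G q"
  unfolding qpart_def by (rule vec.span_base) blast

lemma qpart_zero: assumes "\<And>a t. G (q, a, t) = {0}" shows "qpart G q = {0}"
proof -
  have "(\<Union>a t. G (q, a, t)) \<subseteq> insert 0 {}" using assms by auto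
  then have "vec.span (\<Union>a t. G (q, a, t)) \<subseteq> vec.span (insert 0 {})" by (rule vec.span_mono)
  then show ?thesis unfolding qpart_def using vec.span_zero by auto
qed

lemma shifts_of_graded:
  assumes "\<And>q a t x. x \<in> G (q, a, t) \<Longrightarrow> Y *v x \<in> qpart G (q + s)"
  shows "shifts G s Y"
  unfolding shifts_def
proof (intro allI impI)
  fix q x assume x: "x \<in> qpart G q"
  have sub: "vec.subspace {x. Y *v x \<in> qpart G (q + s)}"
    using qpart_subspace[of G "q+s"]
    unfolding vec.subspace_def by (auto simp: matrix_vector_right_distrib mv_smult_r)
  show "Y *v x \<in> qpart G (q + s)"
    using x unfolding qpart_def[of G q]
    by (rule vec.span_induct[OF _ sub]) (use assms in auto)
qed

lemma shifts_mult: "shifts G s A \<Longrightarrow> shifts G s' B \<Longrightarrow> r = s + s' \<Longrightarrow> shifts G r (A ** B)"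
  unfolding shifts_def matrix_vector_mul_assoc[symmetric]
  by (metis add.commute add.left_commute)

lemma shifts_diff: "shifts G s A \<Longrightarrow> shifts G s B \<Longrightarrow> shifts G s (A - B)"
  unfolding shifts_def
proof (intro allI impI)
  fix q x assume "\<forall>q x. x \<in> qpart G q \<longrightarrow> A *v x \<in> qpart G (q + s)"
    "\<forall>q x. x \<in> qpart G q \<longrightarrow> B *v x \<in> qpart G (q + s)" "x \<in> qpart G q"
  then show "(A - B) *v x \<in> qpart G (q + s)"
    using vec.subspace_diff[OF qpart_subspace[of G "q+s"]] by (simp add: matrix_vector_mult_diff_rdistrib)
qed

lemma shifts_neg: "shifts G s A \<Longrightarrow> shifts G s (- A)"
  unfolding shifts_def
proof (intro allI impI)
  fix q x assume "\<forall>q x. x \<in> qpart G q \<longrightarrow> A *v x \<in> qpart G (q + s)" "x \<in> qpart G q"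
  then show "(- A) *v x \<in> qpart G (q + s)"
    using vec.subspace_neg[OF qpart_subspace[of G "q+s"]] by (simp add: mv_neg_l)
qed

lemma shifts_mat1: "shifts G 0 (mat 1)"
  unfolding shifts_def by simp

lemma graded_eq:
  fixes A B :: "complex^'n^'n"
  assumes gr: "trigraded G"
    and h: "\<And>q a t x. x \<in> G (q, a, t) \<Longrightarrow> A *v x = B *v x"
  shows "A = B"
  unfolding matrix_eq
proof
  fix x
  obtain c where c: "\<forall>d. c d \<in> G d" "x = (\<Sum>d\<in>{d. c d \<noteq> 0}. c d)"
    using gr unfolding trigraded_def by metis
  have "\<And>d. A *v c d = B *v c d" using c(1) h by (metis prod_cases3)
  then show "A *v x = B *v x" using c(2) by (simp add: mv_sum_r)
qed

lemma grade_bound: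
  assumes gr: "trigraded G"
  shows "\<exists>Q. \<forall>q a t. G (q, a, t) \<noteq> {0} \<longrightarrow> \<bar>q\<bar> < Q"
proof -
  have fin: "finite {d. G d \<noteq> {0}}" using gr unfolding trigraded_def by blast
  define Q where "Q = Max ((\<lambda>d. \<bar>fst d\<bar>) ` {d. G d \<noteq> {0}}) + 1"
  have "\<bar>q\<bar> < Q" if "G (q, a, t) \<noteq> {0}" for q a t
  proof -
    have "(q,a,t) \<in> {d. G d \<noteq> {0}}" using that by simp
    then have "\<bar>fst (q,a,t)\<bar> \<in> (\<lambda>d. \<bar>fst d\<bar>) ` {d. G d \<noteq> {0}}" by (rule imageI)
    then have "\<bar>fst (q,a,t)\<bar> \<le> Max ((\<lambda>d. \<bar>fst d\<bar>) ` {d. G d \<noteq> {0}})"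
      using fin by (intro Max_ge) auto
    then show ?thesis unfolding Q_def by simp
  qed
  then show ?thesis by blast
qed

lemma shifts_big_zero:
  assumes gr: "trigraded G"
  shows "\<exists>N. \<forall>s Y. N \<le> \<bar>s\<bar> \<longrightarrow> shifts G s Y \<longrightarrow> Y = 0"
proof -
  obtain Q where Q: "\<And>q a t. G (q, a, t) \<noteq> {0} \<Longrightarrow> \<bar>q\<bar> < Q"
    using grade_bound[OF gr] by blast
  have "Y = 0" if s: "2 * Q \<le> \<bar>s\<bar>" and sh: "shifts G s Y" for s Y
  proof (rule graded_eq[OF gr])
    fix q a t x assume x: "x \<in> G (q, a, t)"
    show "Y *v x = 0 *v x"
    proof (cases "G (q, a, t) = {0}")
      case True then show ?thesis using x by simp
    next
      case False
      then have "\<bar>q\<bar> < Q" by (rule Q)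
      then have "\<And>a t. G (q + s, a, t) = {0}" using Q s by force
      then have "qpart G (q + s) = {0}" by (rule qpart_zero)
      then show ?thesis using sh G_in_qpart[of x G q a t, OF x] unfolding shifts_def by auto
    qed
  qed
  then show ?thesis by blast
qed

lemma mpow_Suc': "mpow A (Suc k) = mpow A k ** A"
  by (induct k) (simp_all add: matrix_mul_assoc)

lemma mpow_add: "mpow A (i + j) = mpow A i ** mpow A j"
  by (induct i) (simp_all add: matrix_mul_assoc)

lemma mpow_zero_mono: "mpow A N = (0::complex^'n^'n) \<Longrightarrow> N \<le> m \<Longrightarrow> mpow A m = 0"
proof -
  assume a: "mpow A N = 0" "N \<le> m"
  have "mpow A m = mpow A (m - N + N)" using a(2) by simp
  also have "\<dots> = mpow A (m - N) ** mpow A N" by (rule mpow_add)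
  finally show ?thesis using a(1) by simp
qed

lemma nilpotent_card:
  fixes A :: "complex^'n^'n"
  assumes N: "mpow A N = 0"
  shows "mpow A CARD('n) = 0"
proof -
  define K where "K j = {x. mpow A j *v x = 0}" for j
  have subK: "vec.subspace (K j)" for j
    unfolding K_def vec.subspace_def by (auto simp: matrix_vector_right_distrib mv_smult_r)
  have KSuc: "x \<in> K (Suc j) \<longleftrightarrow> A *v x \<in> K j" for x j
    unfolding K_def mem_Collect_eq mpow_Suc' matrix_vector_mul_assoc ..
  have mono1: "K j \<subseteq> K (Suc j)" for j
  proof
    fix x assume "x \<in> K j"
    then have "A *v (mpow A j *v x) = 0" unfolding K_def by simp
    then show "x \<in> K (Suc j)" unfolding K_def by (simp add: matrix_vector_mul_assoc)
  qed
  have mono: "i \<le> m \<Longrightarrow> K i \<subseteq> K m" for i m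
  proof -
    assume "i \<le> m"
    then show ?thesis
    proof (induct m rule: dec_induct)
      case base then show ?case by simp
    next
      case (step m) then show ?case using mono1[of m] by blast
    qed
  qed
  have stab1: "K j = K (Suc j) \<Longrightarrow> K (Suc j) = K (Suc (Suc j))" for j
  proof -
    assume eq: "K j = K (Suc j)"
    have "K (Suc (Suc j)) \<subseteq> K (Suc j)"
    proof
      fix x assume "x \<in> K (Suc (Suc j))"
      then have "A *v x \<in> K (Suc j)" using KSuc by blast
      then have "A *v x \<in> K j" using eq by simp
      then show "x \<in> K (Suc j)" using KSuc by blast
    qed
    then show ?thesis using mono1[of "Suc j"] by blast
  qed
  have stab0: "K j = K (Suc j) \<Longrightarrow> K (j + i) = K (Suc (j + i)) \<and> K (j + i) = K j" for j i
  proof (induct i)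
    case 0 then show ?case by simp
  next
    case (Suc i)
    then have a: "K (j + i) = K (Suc (j + i))" and b: "K (j + i) = K j" by auto
    have c: "K (Suc (j + i)) = K (Suc (Suc (j + i)))" by (rule stab1[OF a])
    show ?case using a b c by simp
  qed
  have stab: "K m = K j" if "K j = K (Suc j)" "j \<le> m" for j m
  proof -
    have "K (j + (m - j)) = K j" using stab0[OF that(1)] by blast
    then show ?thesis using that(2) by simp
  qed
  have KN: "K N = UNIV" unfolding K_def N by simp
  have P: "K j = UNIV \<or> j \<le> vec.dim (K j)" for j
  proof (induct j)
    case 0 then show ?case by simp
  next
    case (Suc j)
    show ?case
    proof (cases "K (Suc j) = UNIV")
      case True then show ?thesis by simp
    next
      case False
      then have nj: "K j \<noteq> UNIV" using mono1[of j] by auto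
      with Suc have dj: "j \<le> vec.dim (K j)" by simp
      have neq: "K j \<noteq> K (Suc j)"
      proof
        assume eq: "K j = K (Suc j)"
        show False
        proof (cases "j \<le> N")
          case True then show False using stab[OF eq True] KN nj by simp
        next
          case False then have "K N \<subseteq> K j" using mono by simp
          then show False using KN nj by auto
        qed
      qed
      then have "vec.span (K j) \<subset> vec.span (K (Suc j))"
      proof -
        have "K j \<subset> K (Suc j)" using mono1[of j] neq by blast
        moreover have "vec.span (K j) = K j" "vec.span (K (Suc j)) = K (Suc j)"
          using subK vec.span_eq_iff by blast+
        ultimately show ?thesis by (simp del: vec.span_eq_iff)
      qed
      then have "vec.dim (K j) < vec.dim (K (Suc j))" by (rule vec.dim_psubset)
      then show ?thesis using dj by simp
    qed
  qed
  show ?thesis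
  proof (cases "K CARD('n) = UNIV")
    case True
    then have "\<forall>x. mpow A CARD('n) *v x = 0 *v x" unfolding K_def by auto
    then show ?thesis using matrix_eq[of "mpow A CARD('n)" 0] by blast
  next
    case False
    then have "vec.span (K CARD('n)) \<subset> vec.span UNIV"
    proof -
      have "vec.span (K CARD('n)) = K CARD('n)" using subK vec.span_eq_iff by blast
      moreover have "vec.span (UNIV::(complex^'n) set) = UNIV" by simp
      ultimately show ?thesis using False by (auto simp del: vec.span_eq_iff)
    qed
    then have "vec.dim (K CARD('n)) < vec.dim (UNIV :: (complex^'n) set)" by (rule vec.dim_psubset)
    then have "vec.dim (K CARD('n)) < CARD('n)" using card_cart_basis by (metis vec.dim_UNIV)
    then show ?thesis using P[of "CARD('n)"] False by simp
  qed
qed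



lemma comm_zero_commute: "comm (X::complex^'n^'n) Z = 0 \<Longrightarrow> X ** Z = Z ** X"
  unfolding comm_def by simp

lemma comm_pow:
  fixes X Y Z :: "complex^'n^'n"
  assumes XY: "comm X Y = Z" and XZ0: "comm X Z = 0"
  shows "mpow X k ** Y = Y ** mpow X k + real k *\<^sub>R (Z ** mpow X (k - 1))"
proof (induct k)
  case 0 then show ?case by simp
next
  case (Suc k)
  have XY': "X ** Y = Y ** X + Z" using XY unfolding comm_def by (simp add: algebra_simps)
  have XZ: "X ** Z = Z ** X" using XZ0 by (rule comm_zero_commute)
  have t: "real k *\<^sub>R (Z ** (X ** mpow X (k - 1))) = real k *\<^sub>R (Z ** mpow X k)"
    by (cases k) auto
  have "mpow X (Suc k) ** Y = X ** (mpow X k ** Y)" by (simp add: matrix_mul_assoc)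
  also have "\<dots> = X ** (Y ** mpow X k) + real k *\<^sub>R (X ** (Z ** mpow X (k - 1)))"
    by (simp only: Suc matrix_add_ldistrib mm_scaleR_r)
  also have "\<dots> = (Y ** X + Z) ** mpow X k + real k *\<^sub>R (Z ** (X ** mpow X (k - 1)))"
    by (simp only: matrix_mul_assoc XY' XZ)
  also have "\<dots> = Y ** mpow X (Suc k) + real (Suc k) *\<^sub>R (Z ** mpow X k)"
    using t by (simp add: mm_add_r matrix_mul_assoc algebra_simps)
  finally show ?case by simp
qed

lemma card_Suc: obtains m where "CARD('n::finite) = Suc m"
  using not0_implies_Suc[of "CARD('n)"] by auto

lemma exp_conj:
  fixes X Y Z :: "complex^'n^'n"
  assumes nil: "mpow X CARD('n) = 0" and XY: "comm X Y = Z" and XZ0: "comm X Z = 0"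
  shows "nil_exp X ** Y = (Y + Z) ** nil_exp X"
proof -
  obtain m where m: "CARD('n) = Suc m" by (rule card_Suc)
  define g where "g k = (1 / fact k) *\<^sub>R (real k *\<^sub>R (Z ** mpow X (k - 1)))" for k
  have "nil_exp X ** Y = (\<Sum>k\<le>CARD('n). (1 / fact k) *\<^sub>R (mpow X k ** Y))"
    unfolding nil_exp_def by (simp add: mm_sum_l mm_scaleR_l)
  also have "\<dots> = (\<Sum>k\<le>CARD('n). (1 / fact k) *\<^sub>R (Y ** mpow X k)) + (\<Sum>k\<le>CARD('n). g k)"
    unfolding g_def comm_pow[OF XY XZ0] by (simp add: scaleR_add_right sum.distrib)
  also have "(\<Sum>k\<le>CARD('n). (1 / fact k) *\<^sub>R (Y ** mpow X k)) = Y ** nil_exp X"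
    unfolding nil_exp_def by (simp add: mm_sum_r mm_scaleR_r)
  also have "(\<Sum>k\<le>CARD('n). g k) = Z ** nil_exp X"
  proof -
    have gS: "g (Suc i) = (1 / fact i) *\<^sub>R (Z ** mpow X i)" for i
    proof -
      have f: "(fact (Suc i) :: real) = real (Suc i) * fact i" by (rule fact_Suc)
      have "(1 / fact (Suc i)) * real (Suc i) = (1 / fact i :: real)"
        unfolding f by (simp add: field_simps del: of_nat_Suc)
      then show ?thesis unfolding g_def by (simp del: of_nat_Suc)
    qed
    have "(\<Sum>k\<le>CARD('n). g k) = (\<Sum>i\<le>m. (1 / fact i) *\<^sub>R (Z ** mpow X i))"
      unfolding m sum.atMost_Suc_shift gS by (simp add: g_def)
    also have "\<dots> = Z ** (\<Sum>i\<le>m. (1 / fact i) *\<^sub>R mpow X i)"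
      by (simp add: mm_sum_r mm_scaleR_r)
    also have "(\<Sum>i\<le>m. (1 / fact i) *\<^sub>R mpow X i) = nil_exp X"
      unfolding nil_exp_def m sum.atMost_Suc using nil m by simp
    finally show ?thesis .
  qed
  finally show ?thesis by (simp add: mm_add_r)
qed

lemma exp_inj:
  fixes X :: "complex^'n^'n"
  assumes nil: "mpow X CARD('n) = 0" and x: "nil_exp X *v x = 0"
  shows "x = 0"
proof -
  obtain m where m: "CARD('n) = Suc m" by (rule card_Suc)
  have "mpow X 0 *v x = 0"
  proof (rule inc_induct[of 0 "CARD('n)"])
    show "mpow X CARD('n) *v x = 0" using nil by simp
  next
    fix n assume hn: "mpow X (Suc n) *v x = 0"
    have z: "mpow X (n + Suc i) *v x = 0" for i
    proof -
      have "mpow X (n + Suc i) = mpow X i ** mpow X (Suc n)"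
        using mpow_add[of X i "Suc n"] by (simp add: add.commute)
      then show ?thesis using hn by (simp add: matrix_vector_mul_assoc[symmetric])
    qed
    have "0 = mpow X n *v (nil_exp X *v x)" using x by simp
    also have "\<dots> = (\<Sum>k\<le>CARD('n). (1 / fact k) *\<^sub>R (mpow X (n + k) *v x))"
      by (simp add: nil_exp_def mv_sum_l mv_sum_r mv_scaleR_l mv_scaleR_r matrix_vector_mul_assoc mpow_add)
    also have "\<dots> = mpow X n *v x"
      unfolding m sum.atMost_Suc_shift z by simp
    finally show "mpow X n *v x = 0" by simp
  qed simp
  then show ?thesis by simp
qed

lemma comm_scaleR_r: "comm (A::complex^'n^'n) (c *\<^sub>R B) = c *\<^sub>R comm A B"
  by (simp add: comm_def mm_simps algebra_simps)
lemma comm_scaleR_l: "comm (c *\<^sub>R (A::complex^'n^'n)) B = c *\<^sub>R comm A B"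
  by (simp add: comm_def mm_simps algebra_simps)
lemma comm_neg_l: "comm (- (A::complex^'n^'n)) B = - comm A B"
  by (simp add: comm_def mm_simps algebra_simps)
lemma comm_neg_r: "comm (A::complex^'n^'n) (- B) = - comm A B"
  by (simp add: comm_def mm_simps algebra_simps)
lemma comm_leibniz: "comm (A::complex^'n^'n) (B ** C) = comm A B ** C + B ** comm A C"
  by (simp add: comm_def mm_simps algebra_simps)
lemma comm_add_r: "comm (A::complex^'n^'n) (B + C) = comm A B + comm A C"
  by (simp add: comm_def mm_simps algebra_simps)
lemma mv_neg_r: "(A::complex^'n^'n) *v (- x) = - (A *v x)"
  by (simp add: matrix_vector_mult_def vec_eq_iff sum_negf)
lemma comm_0_r: "comm (A::complex^'n^'n) 0 = 0"
  by (simp add: comm_def)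

lemma pair_loc: "finite_dimensional_vector_space_pair_1 ((*s) :: complex \<Rightarrow> complex^'n \<Rightarrow> complex^'n) cart_basis ((*s) :: complex \<Rightarrow> complex^'n \<Rightarrow> complex^'n)"
  by (simp add: finite_dimensional_vector_space_pair_1_def vec.finite_dimensional_vector_space_axioms vec.vector_space_axioms)

lemma dim_transport:
  fixes w :: "complex^'n^'n"
  assumes inj: "\<And>x. w *v x = 0 \<Longrightarrow> x = 0" and map: "\<And>x. x \<in> S \<Longrightarrow> w *v x \<in> T"
  shows "vec.dim S \<le> vec.dim T"
proof -
  have "inj ((*v) w)"
  proof (rule injI)
    fix x y assume "w *v x = w *v y"
    then have "w *v (x - y) = 0" by (simp add: matrix_vector_mult_diff_distrib)
    then have "x - y = 0" by (rule inj)
    then show "x = y" by simp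
  qed
  then have "vec.dim ((*v) w ` S) = vec.dim S"
    using finite_dimensional_vector_space_pair_1.dim_image_eq[OF pair_loc matrix_vector_mul_linear_gen]
    by (metis inj_on_subset subset_UNIV)
  moreover have "(*v) w ` S \<subseteq> T" using map by auto
  ultimately show ?thesis using vec.dim_subset by metis
qed


theorem corollary3p29:
  fixes G :: "int \<times> int \<times> int \<Rightarrow> (complex^'n) set"
    and E F H d1 :: "complex^'n^'n"
  assumes grading: "trigraded G"
    and H_deg: "\<And>q a t x. x \<in> G (q, a, t) \<Longrightarrow> H *v x = (complex_of_int q / 2) *s x"
    and E_deg: "\<And>q a t x. x \<in> G (q, a, t) \<Longrightarrow> E *v x \<in> qpart G (q + 4)"
    and F_deg: "\<And>q a t x. x \<in> G (q, a, t) \<Longrightarrow> F *v x \<in> qpart G (q - 4)"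
    and EF: "comm E F = H"
    and HE: "comm H E = 2 *\<^sub>R E"
    and HF: "comm H F = - (2 *\<^sub>R F)"
    and d1_sq: "d1 ** d1 = 0"
    and d1_deg: "\<And>q a t x. x \<in> G (q, a, t) \<Longrightarrow> d1 *v x \<in> G (q + 2, a - 2, t)"
    and E_d1: "comm E d1 = 0"
  shows "let dm1 = comm F d1; w = weyl E F in
           comm E dm1 = d1 \<and> comm F dm1 = 0 \<and> comm H d1 = d1 \<and> comm H dm1 = - dm1 \<and>
           dm1 ** dm1 = 0 \<and> dm1 ** d1 + d1 ** dm1 = 0 \<and>
           w ** d1 = - (dm1 ** w) \<and> w ** dm1 = d1 ** w \<and>
           (cancelling d1 \<longrightarrow> cancelling dm1)"
proof -
  define dm1 where "dm1 = comm F d1"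
  define Y where "Y k = (comm F ^^ k) d1" for k
  have Y0: "Y 0 = d1" and YS: "Y (Suc k) = comm F (Y k)" for k by (simp_all add: Y_def)
  have Hd1: "comm H d1 = d1"
  proof (rule graded_eq[OF grading])
    fix q a t x assume x: "x \<in> G (q, a, t)"
    have h1: "H *v (d1 *v x) = (complex_of_int (q + 2) / 2) *s (d1 *v x)"
      by (rule H_deg[OF d1_deg[OF x]])
    have h2: "d1 *v (H *v x) = (complex_of_int q / 2) *s (d1 *v x)"
      using H_deg[OF x] by (simp add: mv_smult_r)
    have "comm H d1 *v x = H *v (d1 *v x) - d1 *v (H *v x)"
      by (simp add: comm_def matrix_vector_mult_diff_rdistrib matrix_vector_mul_assoc)
    also have "\<dots> = d1 *v x" unfolding h1 h2
      by (simp add: vec_eq_iff field_simps)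
    finally show "comm H d1 *v x = d1 *v x" .
  qed
  have HY: "comm H (Y k) = (1 - 2 * real k) *\<^sub>R Y k" for k
  proof (induct k)
    case 0 then show ?case using Hd1 Y0 by simp
  next
    case (Suc k)
    have "comm H (Y (Suc k)) = comm (comm H F) (Y k) + comm F (comm H (Y k))"
      unfolding YS by (rule jacobi)
    also have "\<dots> = (-2) *\<^sub>R Y (Suc k) + (1 - 2 * real k) *\<^sub>R Y (Suc k)"
      unfolding HF Suc YS comm_neg_l comm_scaleR_l comm_scaleR_r by simp
    also have "\<dots> = (-2 + (1 - 2 * real k)) *\<^sub>R Y (Suc k)"
      by (simp only: scaleR_left_distrib)
    also have "(-2 + (1 - 2 * real k)) = (1 - 2 * real (Suc k))" by simp
    finally show ?case .
  qed
  have EY: "comm E (Y (Suc k)) = (real (Suc k) * (1 - real k)) *\<^sub>R Y k" for k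
  proof (induct k)
    case 0
    have "comm E (Y (Suc 0)) = comm (comm E F) d1 + comm F (comm E d1)"
      unfolding YS Y0 by (rule jacobi)
    then show ?case using EF Hd1 E_d1 Y0 by (simp add: comm_0_r)
  next
    case (Suc k)
    have "comm E (Y (Suc (Suc k))) = comm (comm E F) (Y (Suc k)) + comm F (comm E (Y (Suc k)))"
      unfolding YS[of "Suc k"] by (rule jacobi)
    also have "\<dots> = (1 - 2 * real (Suc k)) *\<^sub>R Y (Suc k) + (real (Suc k) * (1 - real k)) *\<^sub>R Y (Suc k)"
      unfolding EF HY Suc comm_scaleR_r YS[of k, symmetric] ..
    also have "\<dots> = ((1 - 2 * real (Suc k)) + (real (Suc k) * (1 - real k))) *\<^sub>R Y (Suc k)"
      by (simp only: scaleR_left_distrib)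
    also have "((1 - 2 * real (Suc k)) + (real (Suc k) * (1 - real k))) = (real (Suc (Suc k)) * (1 - real (Suc k)))"
      by (simp add: algebra_simps)
    finally show ?case .
  qed
  have sE: "shifts G 4 E"
    by (rule shifts_of_graded) (rule E_deg)
  have sF: "shifts G (-4) F"
    by (rule shifts_of_graded) (use F_deg in simp)
  have sd1: "shifts G 2 d1"
    by (rule shifts_of_graded) (rule G_in_qpart, rule d1_deg)
  have sY: "shifts G (2 - 4 * int k) (Y k)" for k
  proof (induct k)
    case 0 then show ?case using sd1 Y0 by simp
  next
    case (Suc k)
    have "shifts G (2 - 4 * int (Suc k)) (F ** Y k - Y k ** F)"
      by (rule shifts_diff; rule shifts_mult[OF sF Suc] shifts_mult[OF Suc sF]) simp_all
    then show ?case unfolding YS comm_def .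
  qed
  have sEk: "shifts G (4 * int k) (mpow E k)" for k
  proof (induct k)
    case 0 then show ?case using shifts_mat1 by simp
  next
    case (Suc k) show ?case unfolding mpow.simps by (rule shifts_mult[OF sE Suc]) simp
  qed
  have sFk: "shifts G (- 4 * int k) (mpow (- F) k)" for k
  proof (induct k)
    case 0 then show ?case using shifts_mat1 by simp
  next
    case (Suc k) show ?case unfolding mpow.simps by (rule shifts_mult[OF shifts_neg[OF sF] Suc]) simp
  qed
  obtain N0 where N0: "\<And>s Y. N0 \<le> \<bar>s\<bar> \<Longrightarrow> shifts G s Y \<Longrightarrow> Y = 0"
    using shifts_big_zero[OF grading] by blast
  define k0 where "k0 = nat \<bar>N0\<bar> + 2"
  have k0: "N0 \<le> \<bar>2 - 4 * int k0\<bar>" "N0 \<le> \<bar>4 * int k0\<bar>" "N0 \<le> \<bar>- 4 * int k0\<bar>" "2 \<le> k0"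
    unfolding k0_def by auto
  have Yk0: "Y k0 = 0" by (rule N0[OF k0(1) sY])
  have Y2: "Y 2 = 0"
  proof (rule inc_induct[OF k0(4)])
    show "Y k0 = 0" by (rule Yk0)
  next
    fix n assume n: "2 \<le> n" "n < k0" "Y (Suc n) = 0"
    have "(real (Suc n) * (1 - real n)) *\<^sub>R Y n = 0" using EY[of n] n(3) comm_0_r by metis
    moreover have "real (Suc n) * (1 - real n) \<noteq> 0" using n(1) by simp
    ultimately show "Y n = 0" by simp
  qed
  have Fdm1: "comm F dm1 = 0" using Y2 by (simp add: Y_def dm1_def numeral_2_eq_2)
  have Edm1: "comm E dm1 = d1" using EY[of 0] by (simp add: Y_def dm1_def)
  have Hdm1: "comm H dm1 = - dm1" using HY[of 1] by (simp add: Y_def dm1_def)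
  have anti: "dm1 ** d1 + d1 ** dm1 = 0"
  proof -
    have "dm1 ** d1 + d1 ** dm1 = comm F (d1 ** d1)"
      by (simp add: dm1_def comm_leibniz)
    then show ?thesis using d1_sq by (simp add: comm_0_r)
  qed
  have sq: "dm1 ** dm1 = 0"
  proof -
    have "comm F (dm1 ** d1 + d1 ** dm1) = dm1 ** dm1 + dm1 ** dm1"
      unfolding comm_add_r comm_leibniz Fdm1 dm1_def[symmetric] by simp
    then have "dm1 ** dm1 + dm1 ** dm1 = 0" using anti by (simp add: comm_0_r)
    then have "2 *\<^sub>R (dm1 ** dm1) = 0" by (simp only: scaleR_2)
    then show ?thesis by simp
  qed
  have nE: "mpow E CARD('n) = 0"
    by (rule nilpotent_card, rule N0[OF k0(2) sEk])
  have nF: "mpow (- F) CARD('n) = 0"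
    by (rule nilpotent_card, rule N0[OF k0(3) sFk])
  define eE where "eE = nil_exp E"
  define eF where "eF = nil_exp (- F)"
  have w: "weyl E F = eE ** eF ** eE" unfolding weyl_def eE_def eF_def ..
  have c1: "eE ** d1 = d1 ** eE"
    using exp_conj[OF nE E_d1 comm_0_r] unfolding eE_def by simp
  have c2: "eE ** dm1 = (dm1 + d1) ** eE"
    using exp_conj[OF nE Edm1 E_d1] unfolding eE_def .
  have c3: "eF ** d1 = (d1 - dm1) ** eF"
  proof -
    have a: "comm (- F) d1 = - dm1" by (simp add: comm_neg_l dm1_def)
    have b: "comm (- F) (- dm1) = 0" by (simp add: comm_neg_l comm_neg_r Fdm1)
    show ?thesis using exp_conj[OF nF a b] unfolding eF_def by simp
  qed
  have c4: "eF ** dm1 = dm1 ** eF"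
  proof -
    have a: "comm (- F) dm1 = 0" by (simp add: comm_neg_l Fdm1)
    show ?thesis using exp_conj[OF nF a comm_0_r] unfolding eF_def by simp
  qed
  have w1: "weyl E F ** d1 = - (dm1 ** weyl E F)"
  proof -
    have "weyl E F ** d1 = eE ** eF ** (eE ** d1)" unfolding w by (simp add: matrix_mul_assoc)
    also have "\<dots> = eE ** (eF ** d1) ** eE" unfolding c1 by (simp add: matrix_mul_assoc)
    also have "\<dots> = (eE ** d1 - eE ** dm1) ** eF ** eE" unfolding c3 by (simp add: mm_simps)
    also have "\<dots> = - (dm1 ** weyl E F)" unfolding c1 c2 w by (simp add: mm_simps)
    finally show ?thesis .
  qed
  have w2: "weyl E F ** dm1 = d1 ** weyl E F"
  proof -
    have "weyl E F ** dm1 = eE ** eF ** (eE ** dm1)" unfolding w by (simp add: matrix_mul_assoc)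
    also have "\<dots> = eE ** (eF ** dm1 + eF ** d1) ** eE" unfolding c2 by (simp add: mm_simps)
    also have "\<dots> = (eE ** d1) ** eF ** eE" unfolding c3 c4 by (simp add: mm_simps)
    also have "\<dots> = d1 ** weyl E F" unfolding c1 w by (simp add: matrix_mul_assoc)
    finally show ?thesis .
  qed
  have winj: "x = 0" if "weyl E F *v x = 0" for x
  proof -
    have "eE *v (eF *v (eE *v x)) = 0" using that unfolding w by (simp add: matrix_vector_mul_assoc matrix_mul_assoc)
    then have "eF *v (eE *v x) = 0" using exp_inj[OF nE] unfolding eE_def by blast
    then have "eE *v x = 0" using exp_inj[OF nF] unfolding eF_def by blast
    then show "x = 0" using exp_inj[OF nE] unfolding eE_def by blast
  qed
  have k1: "vec.dim {x. dm1 *v x = 0} \<le> vec.dim {x. d1 *v x = 0}"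
  proof (rule dim_transport[OF winj])
    fix x assume "x \<in> {x. dm1 *v x = 0}"
    then have "weyl E F *v (dm1 *v x) = 0" by simp
    then have "d1 *v (weyl E F *v x) = 0" by (simp only: matrix_vector_mul_assoc w2)
    then show "weyl E F *v x \<in> {x. d1 *v x = 0}" by simp
  qed
  have k2: "vec.dim {x. d1 *v x = 0} \<le> vec.dim {x. dm1 *v x = 0}"
  proof (rule dim_transport[OF winj])
    fix x assume "x \<in> {x. d1 *v x = 0}"
    then have "weyl E F *v (d1 *v x) = 0" by simp
    then have "- (dm1 *v (weyl E F *v x)) = 0" by (simp only: matrix_vector_mul_assoc w1 mv_neg_l)
    then show "weyl E F *v x \<in> {x. dm1 *v x = 0}" by simp
  qed
  have r1: "vec.dim (range ((*v) dm1)) \<le> vec.dim (range ((*v) d1))"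
  proof (rule dim_transport[OF winj])
    fix x assume "x \<in> range ((*v) dm1)"
    then obtain y where "x = dm1 *v y" by blast
    then have "weyl E F *v x = d1 *v (weyl E F *v y)" by (simp add: matrix_vector_mul_assoc w2)
    then show "weyl E F *v x \<in> range ((*v) d1)" by blast
  qed
  have r2: "vec.dim (range ((*v) d1)) \<le> vec.dim (range ((*v) dm1))"
  proof (rule dim_transport[OF winj])
    fix x assume "x \<in> range ((*v) d1)"
    then obtain y where "x = d1 *v y" by blast
    then have "weyl E F *v x = dm1 *v (- (weyl E F *v y))"
      by (simp add: matrix_vector_mul_assoc w1 mv_neg_l mv_neg_r)
    then show "weyl E F *v x \<in> range ((*v) dm1)" by blast
  qed
  have canc: "cancelling d1 \<longrightarrow> cancelling dm1"
    unfolding cancelling_def using sq k1 k2 r1 r2 by simp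
  show ?thesis
    unfolding Let_def dm1_def[symmetric]
    using Edm1 Fdm1 Hd1 Hdm1 sq anti w1 w2 canc by blast
qed

end
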